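(* There exists a completely regular space $X$ (for instance the Niemytzki plane) such that $\mathrm{H}_1(X,\mathbb R)\setminus \mathrm{K}_1^w(X,\mathbb R)\neq\emptyset$.
   Context: $\mathrm{H}_1(X,Y)$: mappings $f:X\to Y$ with $f^{-1}(V)$ an $F_\sigma$-set for every open $V\subseteq Y$. $\mathrm{K}_1^w(X,Y)$: mappings $f:X\to Y$ with $f^{-1}(V)$ a countable union of functionally closed subsets of $X$ for every functionally open $V\subseteq Y$ (functionally closed = zero set of a continuous real function; functionally open = complement of such). *)

theory Defs
  imports "HOL-Analysis.Analysis"
begin

definition functionally_closed :: "'a topology \<Rightarrow> 'a set \<Rightarrow> bool" where
  "functionally_closed X A \<longleftrightarrow>
     (\<exists>g. continuous_map X euclideanreal g \<and> A = {x \<in> topspace X. g x = 0})"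

definition functionally_open :: "'a topology \<Rightarrow> 'a set \<Rightarrow> bool" where
  "functionally_open X A \<longleftrightarrow> A \<subseteq> topspace X \<and> functionally_closed X (topspace X - A)"

definition H1 :: "'a topology \<Rightarrow> 'b topology \<Rightarrow> ('a \<Rightarrow> 'b) \<Rightarrow> bool" where
  "H1 X Y f \<longleftrightarrow> f \<in> topspace X \<rightarrow> topspace Y \<and>
     (\<forall>V. openin Y V \<longrightarrow> fsigma_in X {x \<in> topspace X. f x \<in> V})"

definition K1w :: "'a topology \<Rightarrow> 'b topology \<Rightarrow> ('a \<Rightarrow> 'b) \<Rightarrow> bool" where
  "K1w X Y f \<longleftrightarrow> f \<in> topspace X \<rightarrow> topspace Y \<and>
     (\<forall>V. functionally_open Y V \<longrightarrow>
        (countable union_of functionally_closed X) {x \<in> topspace X. f x \<in> V})"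

end

theory Submission
  imports Defs
begin


definition pt :: "nat \<Rightarrow> real \<Rightarrow> real \<times> real" where
  "pt n x = (of_int \<lfloor>2^n * x\<rfloor> / 2^n, real n + 1)"
definition nb :: "nat \<Rightarrow> real \<Rightarrow> (real \<times> real) set" where
  "nb N x = insert (x,0) ((\<lambda>n. pt n x) ` {N..})"
definition nopen :: "(real \<times> real) set \<Rightarrow> bool" where
  "nopen U \<longleftrightarrow> (\<forall>x. (x,0) \<in> U \<longrightarrow> (\<exists>N. nb N x \<subseteq> U))"
definition NX :: "(real \<times> real) topology" where "NX = topology nopen"

lemma snd_pt[simp]: "snd (pt n x) = real n + 1" by (simp add: pt_def)
lemma pt_ne0[simp]: "pt n x \<noteq> (y, 0)" "(y,0) \<noteq> pt n x"
  by (simp_all add: pt_def)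

lemma nb_mono: "N \<le> M \<Longrightarrow> nb M x \<subseteq> nb N x" by (auto simp: nb_def)

lemma istop: "istopology nopen"
  unfolding istopology_def
proof (intro conjI allI impI ballI)
  fix S T assume "nopen S" "nopen T"
  show "nopen (S \<inter> T)" unfolding nopen_def
  proof (intro allI impI)
    fix x assume "(x,0) \<in> S \<inter> T"
    then obtain N1 N2 where "nb N1 x \<subseteq> S" "nb N2 x \<subseteq> T"
      using \<open>nopen S\<close> \<open>nopen T\<close> unfolding nopen_def by blast
    moreover have "nb (max N1 N2) x \<subseteq> nb N1 x" "nb (max N1 N2) x \<subseteq> nb N2 x"
      by (simp_all add: nb_mono)
    ultimately show "\<exists>N. nb N x \<subseteq> S \<inter> T" by blast
  qed
next
  fix K assume K: "\<forall>S\<in>K. nopen S"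
  show "nopen (\<Union>K)" unfolding nopen_def
  proof (intro allI impI)
    fix x assume "(x,0) \<in> \<Union>K"
    then obtain S where S: "S \<in> K" "(x,0) \<in> S" by blast
    then obtain N where "nb N x \<subseteq> S" using K unfolding nopen_def by blast
    then show "\<exists>N. nb N x \<subseteq> \<Union>K" using S by blast
  qed
qed

lemma openNX[simp]: "openin NX = nopen" by (simp add: NX_def istop)
lemma topNX[simp]: "topspace NX = UNIV"
proof -
  have "nopen UNIV" by (auto simp: nopen_def)
  hence "UNIV \<subseteq> topspace NX" using openin_subset[of NX UNIV] by simp
  thus ?thesis by blast
qed
lemma closedNX: "closedin NX S \<longleftrightarrow> nopen (UNIV - S)" by (simp add: closedin_def)

lemma pt_sep: assumes "x \<noteq> y" shows "\<exists>N. \<forall>n\<ge>N. pt n x \<noteq> pt n y"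
proof -
  have d: "\<bar>x - y\<bar> > 0" using assms by simp
  obtain N where N: "1 / 2^N < \<bar>x - y\<bar>"
    using real_arch_pow_inv[OF d, of "1/2"] by (auto simp: power_one_over)
  show ?thesis
  proof (intro exI allI impI)
    fix n assume "N \<le> n"
    have "(1::real) / 2^n \<le> 1/2^N" using \<open>N \<le> n\<close> by (simp add: frac_le)
    hence lt: "1 / 2^n < \<bar>x - y\<bar>" using N by linarith
    show "pt n x \<noteq> pt n y"
    proof
      assume "pt n x = pt n y"
      hence "\<lfloor>2^n * x\<rfloor> = \<lfloor>2^n * y\<rfloor>" by (simp add: pt_def)
      hence "\<bar>2^n * x - 2^n * y\<bar> < 1" by linarith
      hence "2^n * \<bar>x - y\<bar> < 1" by (simp add: abs_mult right_diff_distrib[symmetric])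
      hence "\<bar>x - y\<bar> < 1 / 2^n" by (simp add: field_simps)
      with lt show False by linarith
    qed
  qed
qed

lemma nb_open: "nopen (nb N x)"
  unfolding nopen_def by (auto simp: nb_def)

lemma nb_closed: "nopen (UNIV - nb N x)"
  unfolding nopen_def
proof (intro allI impI)
  fix y assume "(y,0) \<in> UNIV - nb N x"
  hence yx: "y \<noteq> x" by (auto simp: nb_def)
  obtain M where M: "\<forall>n\<ge>M. pt n y \<noteq> pt n x" using pt_sep[OF yx] by blast
  have "nb (max M N) y \<subseteq> UNIV - nb N x"
  proof
    fix p assume "p \<in> nb (max M N) y"
    then show "p \<in> UNIV - nb N x"
      using \<open>(y,0) \<in> UNIV - nb N x\<close> M
      apply (auto simp: nb_def)
      by (metis add_right_cancel of_nat_eq_iff snd_pt)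
  qed
  then show "\<exists>K. nb K y \<subseteq> UNIV - nb N x" by blast
qed

lemma single_open: "snd p \<noteq> 0 \<Longrightarrow> nopen {p}"
  by (auto simp: nopen_def)

lemma single_closed: "nopen (UNIV - {p})"
  unfolding nopen_def
proof (intro allI impI)
  fix x assume x: "(x,0) \<in> UNIV - {p}"
  obtain N :: nat where N: "snd p < real N" using reals_Archimedean2 by blast
  have "nb N x \<subseteq> UNIV - {p}"
  proof
    fix q assume "q \<in> nb N x"
    then consider "q = (x,0)" | n where "n \<ge> N" "q = pt n x" by (auto simp: nb_def)
    then show "q \<in> UNIV - {p}"
    proof cases
      case 1 then show ?thesis using x by simp
    next
      case 2
      have "snd q = real n + 1" using 2 by simp
      moreover have "real N \<le> real n" using 2 by simp
      ultimately show ?thesis using N by auto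
    qed
  qed
  then show "\<exists>N. nb N x \<subseteq> UNIV - {p}" by blast
qed

lemma clopen_sep:
  assumes "nopen (UNIV - S)" "q \<notin> S"
  shows "\<exists>K. nopen K \<and> nopen (UNIV - K) \<and> q \<in> K \<and> K \<inter> S = {}"
proof (cases "snd q = 0")
  case True
  then have q: "q = (fst q, 0)" by (cases q) auto
  have "(fst q, 0) \<in> UNIV - S" using q assms(2) by simp
  with assms(1) obtain N where "nb N (fst q) \<subseteq> UNIV - S" unfolding nopen_def by blast
  then show ?thesis using nb_open nb_closed q
    by (metis Diff_disjoint Int_commute disjoint_eq_subset_Compl Compl_eq_Diff_UNIV insertI1 nb_def)
next
  case False
  then show ?thesis using single_open[OF False] single_closed[of q] assms by auto
qed

lemma ind_cont:
  assumes "nopen K" "nopen (UNIV - K)"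
  shows "continuous_map NX euclideanreal (\<lambda>p. if p \<in> K then a else b)"
  unfolding continuous_map_def
proof (intro conjI allI impI)
  fix U :: "real set" assume "openin euclideanreal U"
  have e: "{x \<in> topspace NX. (if x \<in> K then a else b) \<in> U} =
     (if a \<in> U then K else {}) \<union> (if b \<in> U then UNIV - K else {})" by auto
  have "nopen {}" "nopen (UNIV :: (real\<times>real) set)" by (auto simp: nopen_def)
  then show "openin NX {x \<in> topspace NX. (if x \<in> K then a else b) \<in> U}"
    unfolding e using assms by (auto intro!: openin_Un simp del: Un_empty)
qed auto

lemma creg: "completely_regular_space NX"
  unfolding completely_regular_space_def
proof (intro allI impI)
  fix S x assume a: "closedin NX S \<and> x \<in> topspace NX - S"
  then obtain K where K: "nopen K" "nopen (UNIV - K)" "x \<in> K" "K \<inter> S = {}"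
    using clopen_sep closedNX by (metis DiffD2)
  let ?f = "\<lambda>p. if p \<in> K then 0 else (1::real)"
  have "continuous_map NX (top_of_set {0..1}) ?f"
    using ind_cont[OF K(1,2)] by (auto simp: continuous_map_in_subtopology)
  then show "\<exists>f::real\<times>real\<Rightarrow>real. continuous_map NX (top_of_set {0..1}) f \<and> f x = 0 \<and> f ` S \<subseteq> {1}"
    using K by (intro exI[of _ ?f]) auto
qed

lemma haus: "Hausdorff_space NX"
  unfolding Hausdorff_space_def
proof (intro allI impI)
  fix x y :: "real \<times> real" assume "x \<in> topspace NX \<and> y \<in> topspace NX \<and> x \<noteq> y"
  then have "x \<notin> {y}" by simp
  then obtain K where K: "nopen K" "nopen (UNIV - K)" "x \<in> K" "K \<inter> {y} = {}"
    using clopen_sep[OF single_closed[of y]] by blast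
  then show "\<exists>U V. openin NX U \<and> openin NX V \<and> x \<in> U \<and> y \<in> V \<and> disjnt U V"
    by (intro exI[of _ K] exI[of _ "UNIV - K"]) (auto simp: disjnt_def)
qed

definition L :: "(real \<times> real) set" where "L = {p. snd p = 0}"

lemma nb_sub: "(x,0) \<in> U \<Longrightarrow> (\<And>n. n \<ge> N \<Longrightarrow> pt n x \<in> U) \<Longrightarrow> nb N x \<subseteq> U"
  unfolding nb_def by blast

lemma pt_notL: "pt n x \<notin> L"
proof
  assume "pt n x \<in> L"
  hence "snd (pt n x) = 0" unfolding L_def by blast
  hence "real n + 1 = (0::real)" by (simp only: snd_pt)
  thus False by linarith
qed

lemma subL_closed: "B \<subseteq> L \<Longrightarrow> nopen (UNIV - B)"
  unfolding nopen_def
proof (intro allI impI)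
  fix x assume "B \<subseteq> L" "(x,0) \<in> UNIV - B"
  then have "nb 0 x \<subseteq> UNIV - B" using pt_notL by (intro nb_sub) auto
  then show "\<exists>N. nb N x \<subseteq> UNIV - B" by blast
qed

definition Fn :: "nat \<Rightarrow> (real \<times> real) set" where
  "Fn n = {p. snd p \<noteq> 0 \<and> (\<forall>m\<ge>n. snd p \<noteq> real m + 1)}"

lemma Fn_closed: "nopen (UNIV - Fn n)"
  unfolding nopen_def
proof (intro allI impI)
  fix x assume "(x,0) \<in> UNIV - Fn n"
  have "pt k x \<notin> Fn n" if "k \<ge> n" for k
  proof
    assume "pt k x \<in> Fn n"
    hence "\<forall>m\<ge>n. snd (pt k x) \<noteq> real m + 1" unfolding Fn_def by blast
    thus False using that by auto
  qed
  hence "nb n x \<subseteq> UNIV - Fn n" using \<open>(x,0) \<in> UNIV - Fn n\<close> by (intro nb_sub) auto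
  then show "\<exists>N. nb N x \<subseteq> UNIV - Fn n" by blast
qed

lemma Fn_Union: "UNIV - L = \<Union> (range Fn)"
proof
  show "UNIV - L \<subseteq> \<Union> (range Fn)"
  proof
    fix p assume p: "p \<in> UNIV - L"
    show "p \<in> \<Union> (range Fn)"
    proof (cases "\<exists>m::nat. snd p = real m + 1")
      case True
      then obtain m :: nat where m: "snd p = real m + 1" by blast
      have "snd p \<noteq> 0" using m by simp
      moreover have "\<forall>m'\<ge>Suc m. snd p \<noteq> real m' + 1" using m by simp
      ultimately have "p \<in> Fn (Suc m)" unfolding Fn_def by blast
      then show ?thesis by blast
    next
      case False
      then have "p \<in> Fn 0" using p unfolding Fn_def L_def by blast
      then show ?thesis by blast
    qed
  qed
next
  show "\<Union> (range Fn) \<subseteq> UNIV - L" unfolding Fn_def L_def by blast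
qed

lemma H1_ind:
  assumes "B \<subseteq> L"
  shows "H1 NX euclideanreal (\<lambda>p. if p \<in> B then 1 else 0)"
  unfolding H1_def
proof (intro conjI allI impI)
  fix V :: "real set"
  have fB: "fsigma_in NX B" using subL_closed[OF assms] closedNX closed_imp_fsigma_in by blast
  have "nopen (UNIV - (L - B))" by (rule subL_closed) auto
  hence f1: "fsigma_in NX (L - B)" using closedNX closed_imp_fsigma_in by blast
  have f2: "fsigma_in NX (UNIV - L)" unfolding Fn_Union
    using Fn_closed closedNX closed_imp_fsigma_in by (intro fsigma_in_Union) auto
  have "UNIV - B = (L - B) \<union> (UNIV - L)" using assms by auto
  hence fC: "fsigma_in NX (UNIV - B)" using f1 f2 fsigma_in_Un by metis
  have e: "{x \<in> topspace NX. (if x \<in> B then 1 else 0) \<in> V} =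
     (if (1::real) \<in> V then B else {}) \<union> (if (0::real) \<in> V then UNIV - B else {})" by auto
  show "fsigma_in NX {x \<in> topspace NX. (if x \<in> B then 1 else 0) \<in> V}"
    unfolding e using fB fC fsigma_in_topspace[of NX] by (auto intro: fsigma_in_Un simp del: Un_empty)
qed auto



lemma exJ: "\<exists>J::(nat \<Rightarrow> real) \<Rightarrow> real. inj J"
proof -
  have "(UNIV::real set) \<lesssim> (UNIV::nat set set)"
    using nat_sets_eqpoll_reals eqpoll_sym eqpoll_imp_lepoll by blast
  then obtain i :: "real \<Rightarrow> nat set" where i: "inj i" unfolding lepoll_def by auto
  have "(UNIV::nat set set) \<lesssim> (UNIV::real set)"
    using nat_sets_eqpoll_reals eqpoll_imp_lepoll by blast
  then obtain b :: "nat set \<Rightarrow> real" where b: "inj b" unfolding lepoll_def by auto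
  define Fe where "Fe h = {prod_encode (k,m) | k m. m \<in> i (h k)}" for h :: "nat \<Rightarrow> real"
  have mem: "prod_encode (k,m) \<in> Fe h \<longleftrightarrow> m \<in> i (h k)" for h k m
    unfolding Fe_def by (auto simp: prod_encode_eq)
  have "inj Fe"
  proof (rule injI)
    fix h h' assume e: "Fe h = Fe h'"
    have "i (h k) = i (h' k)" for k
    proof (rule set_eqI)
      fix m show "m \<in> i (h k) \<longleftrightarrow> m \<in> i (h' k)" using mem[of k m h] mem[of k m h'] e by simp
    qed
    then show "h = h'" using i by (intro ext) (simp add: inj_eq)
  qed
  then show ?thesis using b by (intro exI[of _ "b \<circ> Fe"]) (simp add: inj_compose)
qed

definition enc :: "nat \<Rightarrow> nat \<Rightarrow> real \<Rightarrow> nat" where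
  "enc k n x = prod_encode (k, to_nat (\<lfloor>2^n * x\<rfloor>, n))"
definition Sc :: "(nat \<Rightarrow> real) \<Rightarrow> (real \<times> real) set" where
  "Sc h = {(x,0) | x. \<exists>k. (\<lambda>n. h (enc k n x)) \<longlonglongrightarrow> 0}"
definition code :: "(nat \<Rightarrow> real \<times> real \<Rightarrow> real) \<Rightarrow> nat \<Rightarrow> real" where
  "code G m = (case prod_decode m of (k,i) \<Rightarrow>
      (case (from_nat i :: int \<times> nat) of (j,n) \<Rightarrow> G k (of_int j / 2^n, real n + 1)))"

lemma code_enc: "code G (enc k n x) = G k (pt n x)"
  by (simp add: code_def enc_def pt_def)

lemma cont_lim:
  assumes "continuous_map NX euclideanreal g"
  shows "(\<lambda>n. g (pt n x)) \<longlonglongrightarrow> g (x,0)"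
proof (rule LIMSEQ_I)
  fix r :: real assume "0 < r"
  have "openin NX {p \<in> topspace NX. g p \<in> ball (g (x,0)) r}"
    using openin_continuous_map_preimage[OF assms, of "ball (g (x,0)) r"] by simp
  hence "nopen {p. g p \<in> ball (g (x,0)) r}" by simp
  moreover have "(x,0) \<in> {p. g p \<in> ball (g (x,0)) r}" using \<open>0 < r\<close> by simp
  ultimately obtain N where N: "nb N x \<subseteq> {p. g p \<in> ball (g (x,0)) r}"
    unfolding nopen_def by blast
  have "norm (g (pt n x) - g (x,0)) < r" if "n \<ge> N" for n
  proof -
    have "pt n x \<in> nb N x" using that by (auto simp: nb_def)
    with N have "dist (g (x,0)) (g (pt n x)) < r" by auto
    thus ?thesis by (simp add: dist_real_def abs_minus_commute)
  qed
  then show "\<exists>no. \<forall>n\<ge>no. norm (g (pt n x) - g (x,0)) < r" by blast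
qed

lemma notK1w:
  assumes J: "inj J"
  defines "B \<equiv> {(J h, 0) | h. (J h, 0) \<notin> Sc h}"
  shows "\<not> K1w NX euclideanreal (\<lambda>p. if p \<in> B then 1 else 0)"
proof
  assume K: "K1w NX euclideanreal (\<lambda>p. if p \<in> B then 1 else 0)"
  have fo: "functionally_open euclideanreal {1/2<..}"
    unfolding functionally_open_def functionally_closed_def
  proof (intro conjI exI)
    show "continuous_map euclideanreal euclideanreal (\<lambda>t::real. max 0 (t - 1/2))"
      by (auto intro!: continuous_intros)
    show "topspace euclideanreal - {1/2<..} = {x \<in> topspace euclideanreal. max 0 (x - 1/2) = (0::real)}"
      by (auto simp: max_def)
  qed simp
  have pre: "{x \<in> topspace NX. (if x \<in> B then 1 else (0::real)) \<in> {1/2<..}} = B" by auto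
  from K fo have "(countable union_of functionally_closed NX) {x \<in> topspace NX. (if x \<in> B then 1 else (0::real)) \<in> {1/2<..}}"
    unfolding K1w_def by blast
  hence "(countable union_of functionally_closed NX) B" by (simp only: pre)
  then obtain U where U: "countable U" "\<forall>u\<in>U. functionally_closed NX u" "\<Union>U = B"
    unfolding union_of_def by auto
  define U' where "U' = insert {} U"
  have cU: "countable U'" "U' \<noteq> {}" using U(1) by (auto simp: U'_def)
  define u where "u = from_nat_into U'"
  have ru: "range u = U'" using range_from_nat_into[OF cU(2) cU(1)] unfolding u_def .
  have fe: "functionally_closed NX {}"
    unfolding functionally_closed_def by (intro exI[of _ "\<lambda>_. 1::real"]) auto
  have "functionally_closed NX (u k)" for k
  proof -
    have "u k \<in> U'" using ru by blast
    thus ?thesis using U(2) fe by (auto simp: U'_def)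
  qed
  hence "\<forall>k. \<exists>g. continuous_map NX euclideanreal g \<and> u k = {x \<in> topspace NX. g x = 0}"
    unfolding functionally_closed_def by blast
  then obtain G where G: "\<forall>k. continuous_map NX euclideanreal (G k) \<and> u k = {x \<in> topspace NX. G k x = 0}"
    by metis
  have Gc: "continuous_map NX euclideanreal (G k)" for k using G by blast
  have BU: "B = \<Union>(range u)" using U ru by (auto simp: U'_def)
  have Bdesc: "p \<in> B \<longleftrightarrow> (\<exists>k. G k p = 0)" for p
  proof -
    have "p \<in> \<Union>(range u) \<longleftrightarrow> (\<exists>k. p \<in> u k)" by blast
    also have "\<dots> \<longleftrightarrow> (\<exists>k. G k p = 0)" using G by auto
    finally show ?thesis using BU by simp
  qed
  have BL: "B \<subseteq> L" unfolding B_def L_def by auto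
  have ScB: "Sc (code G) = B"
  proof (rule set_eqI)
    fix p
    show "p \<in> Sc (code G) \<longleftrightarrow> p \<in> B"
    proof
      assume "p \<in> Sc (code G)"
      then obtain x k where p: "p = (x,0)" and lim: "(\<lambda>n. G k (pt n x)) \<longlonglongrightarrow> 0"
        unfolding Sc_def by (auto simp: code_enc)
      then have "G k (x,0) = 0" using cont_lim[OF Gc] LIMSEQ_unique by blast
      thus "p \<in> B" using Bdesc p by blast
    next
      assume pB: "p \<in> B"
      then have "snd p = 0" using BL unfolding L_def by blast
      then have p: "p = (fst p, 0)" by (cases p) simp
      obtain k where "G k p = 0" using Bdesc pB by blast
      hence "(\<lambda>n. code G (enc k n (fst p))) \<longlonglongrightarrow> 0"
        using cont_lim[OF Gc, of k "fst p"] p by (simp add: code_enc)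
      thus "p \<in> Sc (code G)" unfolding Sc_def using p by blast
    qed
  qed
  define z where "z = (J (code G), 0::real)"
  have "z \<in> B \<longleftrightarrow> z \<notin> Sc (code G)"
  proof
    assume "z \<in> B"
    then obtain h where h: "z = (J h, 0)" "(J h,0) \<notin> Sc h" unfolding B_def by blast
    then have "J h = J (code G)" using z_def by simp
    then have "h = code G" using J by (simp add: inj_eq)
    thus "z \<notin> Sc (code G)" using h by simp
  next
    assume "z \<notin> Sc (code G)" thus "z \<in> B" unfolding B_def z_def by blast
  qed
  thus False using ScB by blast
qed

theorem mainTheorem4:
  shows "\<exists>X :: (real \<times> real) topology.
           completely_regular_space X \<and> Hausdorff_space X \<and>
           (\<exists>f. H1 X euclideanreal f \<and> \<not> K1w X euclideanreal f)"
proof -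
  obtain J :: "(nat \<Rightarrow> real) \<Rightarrow> real" where J: "inj J" using exJ by blast
  define B where "B = {(J h, 0::real) | h. (J h, 0) \<notin> Sc h}"
  have BL: "B \<subseteq> L" unfolding B_def L_def by auto
  show ?thesis
    using creg haus H1_ind[OF BL] notK1w[OF J] unfolding B_def by blast
qed

end
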